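(* Let $\tau\in(0,\frac{\pi}{4})\cup(\frac{\pi}{4},\frac{\pi}{2})$, $a=\cot\tau$, $b=\sqrt{|\cot^2\tau-1|}$, and let $F=F_\tau$ be defined on symmetric matrices with eigenvalues $\lambda_1\le\dots\le\lambda_n$ by $F_\tau=\sum_i\ln\big(\frac{\lambda_i+a-b}{\lambda_i+a+b}\big)$ if $0<\tau<\frac{\pi}{4}$ and $F_\tau=\sum_i\arctan\big(\frac{\lambda_i+a-b}{\lambda_i+a+b}\big)$ if $\frac{\pi}{4}<\tau<\frac{\pi}{2}$. Then $F_\tau$ satisfies all of the following: (i) $F_\tau$ is monotonically increasing in each $\lambda_i$ (so $\partial F_\tau/\partial\lambda_i>0$) and is a symmetric function of $(\lambda_1,\dots,\lambda_n)$, i.e. invariant under interchange of any two eigenvalues; (ii) for any $\mu_1>0,\mu_2>0$ there exist positive constants $\lambda,\Lambda$ depending only on $\mu_1,\mu_2$ (and $\tau,n$) such that for every $(\lambda_1,\dots,\lambda_n)\in\Gamma^+_{]\mu_1,\mu_2[}$, $$\Lambda\ge\sum_{i=1}^n\frac{\partial F_\tau}{\partial\lambda_i}\ge\lambda\qquad\text{and}\qquad \Lambda\ge\sum_{i=1}^n\frac{\partial F_\tau}{\partial\lambda_i}\lambda_i^2\ge\lambda;$$ (iii) both $F_\tau(A)$ and $F_\tau^*(A):=-F_\tau(A^{-1})$ are concave on the cone $\Gamma_+$ of positive definite symmetric matrices; (iv) there exist functions $f_1,f_2$, monotonically increasing on $(0,+\infty)$, with $f_1(\lambda_1)\le F_\tau(\lambda_1,\dots,\lambda_n)\le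 f_2(\lambda_n)$ for all $0\le\lambda_1\le\dots\le\lambda_n$ (for which $F_\tau$ is defined), and such that for every $\Phi,\Psi\in\mathcal{L}$ there exist $t_1>0$ and $t_2>0$ with: every $t>0$ satisfying $f_1(t)\le\Phi$ has $t\le t_1$, and every $t>0$ satisfying $f_2(t)\ge\Psi$ has $t\ge t_2$.
   Context: $\Gamma^+_{]\mu_1,\mu_2[}=\{(\lambda_1,\dots,\lambda_n):0\le\lambda_1\le\lambda_2\le\dots\le\lambda_n,\ \lambda_1\le\mu_1,\ \lambda_n\ge\mu_2\}$. $\mathcal{L}=\{\Upsilon:\ \exists\,0<\lambda_1\le\dots\le\lambda_n\text{ with }\Upsilon=F_\tau(\lambda_1,\dots,\lambda_n)\}$, the set of values of $F_\tau$ on positive eigenvalue vectors. $F_\tau(A)$ for a symmetric matrix means $F_\tau$ evaluated at its ordered eigenvalues. *)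

theory Defs
  imports "HOL-Analysis.Analysis"
begin

definition a_par :: "real \<Rightarrow> real" where
  "a_par tau = cot tau"

definition b_par :: "real \<Rightarrow> real" where
  "b_par tau = sqrt \<bar>(cot tau)\<^sup>2 - 1\<bar>"

definition g_tau :: "real \<Rightarrow> real \<Rightarrow> real" where
  "g_tau tau x =
     (if tau < pi / 4
      then ln ((x + a_par tau - b_par tau) / (x + a_par tau + b_par tau))
      else arctan ((x + a_par tau - b_par tau) / (x + a_par tau + b_par tau)))"

text \<open>F_tau as a function of the eigenvalue vector (lambda_1, ..., lambda_n), given as a list.\<close>
definition F_tau :: "real \<Rightarrow> real list \<Rightarrow> real" where
  "F_tau tau xs = (\<Sum>x\<leftarrow>xs. g_tau tau x)"

text \<open>Partial derivative of F_tau with respect to the i-th eigenvalue (0-based index).\<close>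
definition dF_tau :: "real \<Rightarrow> real list \<Rightarrow> nat \<Rightarrow> real" where
  "dF_tau tau xs i = deriv (\<lambda>t. F_tau tau (xs[i := t])) (xs ! i)"

text \<open>Gamma^+_{]mu1,mu2[} for vectors of length n (0-based list indices).\<close>
definition Gamma_mu :: "nat \<Rightarrow> real \<Rightarrow> real \<Rightarrow> real list set" where
  "Gamma_mu n mu1 mu2 = {xs. length xs = n \<and> sorted xs \<and> 0 \<le> xs ! 0
       \<and> xs ! 0 \<le> mu1 \<and> xs ! (n - 1) \<ge> mu2}"

definition L_tau :: "real \<Rightarrow> nat \<Rightarrow> real set" where
  "L_tau tau n = {F_tau tau xs | xs. length xs = n \<and> sorted xs \<and> (\<forall>x\<in>set xs. 0 < x)}"

text \<open>Ordered eigenvalues (with multiplicity) of a real matrix whose characteristic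
  polynomial splits over the reals, in particular of a symmetric matrix:
  the sorted list of the roots of det (x I - A).\<close>
definition eigvals :: "real^'n^'n \<Rightarrow> real list" where
  "eigvals A = (THE xs. length xs = CARD('n) \<and> sorted xs \<and>
       (\<forall>x. det (x *\<^sub>R mat 1 - A) = (\<Prod>l\<leftarrow>xs. x - l)))"

definition F_mat :: "real \<Rightarrow> real^'n^'n \<Rightarrow> real" where
  "F_mat tau A = F_tau tau (eigvals A)"

definition pos_def_sym :: "(real^'n^'n) set" where
  "pos_def_sym = {A. transpose A = A \<and> (\<forall>x. x \<noteq> 0 \<longrightarrow> x \<bullet> (A *v x) > 0)}"

end

theory Submission
  imports Defs "HOL-Computational_Algebra.Polynomial"
begin


lemma sym_inner:
  fixes A :: "real^'n^'n" assumes "transpose A = A"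
  shows "u \<bullet> (A *v w) = (A *v u) \<bullet> w"
  by (metis assms dot_lmul_matrix transpose_matrix_vector)

lemma quad_zero:
  fixes N K :: real
  assumes N: "N \<ge> 0" and H: "\<And>t. 2 * t * N + t\<^sup>2 * K \<le> 0"
  shows "N = 0"
proof -
  define t where "t = N / (\<bar>K\<bar> + 1)"
  have t0: "t \<ge> 0" using N by (simp add: t_def)
  have "2 * t * N + t\<^sup>2 * K \<le> 0" by (rule H)
  moreover have "t\<^sup>2 * (- \<bar>K\<bar>) \<le> t\<^sup>2 * K" by (intro mult_left_mono) auto
  ultimately have "2 * t * N \<le> t\<^sup>2 * \<bar>K\<bar>" by linarith
  hence "2 * t * N \<le> t * (t * \<bar>K\<bar>)" by (simp add: power2_eq_square)
  moreover have "t * \<bar>K\<bar> \<le> N"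
  proof -
    have "t * \<bar>K\<bar> = N * (\<bar>K\<bar> / (\<bar>K\<bar> + 1))" by (simp add: t_def)
    also have "\<dots> \<le> N * 1" using N by (intro mult_left_mono) auto
    finally show ?thesis by simp
  qed
  ultimately have "2 * t * N \<le> t * N" using t0 mult_left_mono by (smt (verit))
  hence "t * N \<le> 0" by linarith
  hence "N * N / (\<bar>K\<bar> + 1) \<le> 0" by (simp add: t_def)
  moreover have "\<bar>K\<bar> + 1 > 0" by simp
  ultimately have "N * N \<le> 0" by (simp add: divide_le_0_iff)
  thus "N = 0" using N by (simp add: mult_le_0_iff)
qed

lemma eigen_basis_sub:
  fixes A :: "real^'n^'n"
  assumes sym: "transpose A = A"
  shows "subspace S \<Longrightarrow> (\<forall>x\<in>S. A *v x \<in> S) \<Longrightarrow> dim S = k \<Longrightarrow>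
    \<exists>B. B \<subseteq> S \<and> finite B \<and> card B = k \<and> pairwise orthogonal B \<and>
        (\<forall>x\<in>B. norm x = 1 \<and> (\<exists>l. A *v x = l *\<^sub>R x))"
proof (induction k arbitrary: S)
  case 0 then show ?case by (intro exI[of _ "{}"]) auto
next
  case (Suc k)
  note sub = Suc.prems(1) and inv = Suc.prems(2)
  let ?q = "\<lambda>x. x \<bullet> (A *v x)"
  let ?K = "S \<inter> sphere 0 1"
  have "\<not> S \<subseteq> {0}" using Suc.prems(3) dim_eq_0[of S] by auto
  then obtain v where v: "v \<in> S" "v \<noteq> 0" by auto
  have "v /\<^sub>R norm v \<in> ?K" using v sub by (auto simp: subspace_scale)
  hence Kne: "?K \<noteq> {}" by auto
  have Kc: "compact ?K" by (intro closed_Int_compact closed_subspace sub compact_sphere)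
  have "continuous_on ?K ?q"
    by (intro continuous_on_inner continuous_on_id matrix_vector_mult_linear_continuous_on)
  from continuous_attains_sup[OF Kc Kne this]
  obtain x where xK: "x \<in> ?K" and xmax: "\<And>y. y \<in> ?K \<Longrightarrow> ?q y \<le> ?q x" by blast
  define l where "l = ?q x"
  have xS: "x \<in> S" and nx: "norm x = 1" using xK by auto
  have xx: "x \<bullet> x = 1" using nx by (simp add: norm_eq_1)
  have qscale: "?q (c *\<^sub>R z) = c\<^sup>2 * ?q z" for c z
    by (simp add: matrix_vector_mult_scaleR power2_eq_square)
  have hom: "?q z \<le> l * (z \<bullet> z)" if zS: "z \<in> S" for z
  proof (cases "z = 0")
    case True then show ?thesis by simp
  next
    case False
    let ?u = "z /\<^sub>R norm z"
    have "?u \<in> ?K" using zS False sub by (auto simp: subspace_scale)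
    hence "?q ?u \<le> l" unfolding l_def by (rule xmax)
    moreover have "?q z = (norm z)\<^sup>2 * ?q ?u"
      using qscale[of "norm z" ?u] False by simp
    ultimately have "?q z \<le> (norm z)\<^sup>2 * l"
      by (simp add: mult_left_mono)
    thus ?thesis by (simp add: power2_norm_eq_inner mult.commute)
  qed
  define y where "y = A *v x - l *\<^sub>R x"
  have yS: "y \<in> S" unfolding y_def using inv xS sub
    by (simp add: subspace_diff subspace_scale)
  have xy: "x \<bullet> y = 0" by (simp add: y_def inner_diff_right xx l_def)
  have yAx: "y \<bullet> (A *v x) = y \<bullet> y"
  proof -
    have "A *v x = y + l *\<^sub>R x" by (simp add: y_def)
    hence "y \<bullet> (A *v x) = y \<bullet> y + l * (y \<bullet> x)" by (simp add: inner_add_right)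
    thus ?thesis using xy by (simp add: inner_commute)
  qed
  have "2 * t * (y \<bullet> y) + t\<^sup>2 * (?q y - l * (y \<bullet> y)) \<le> 0" for t
  proof -
    let ?z = "x + t *\<^sub>R y"
    have zS: "?z \<in> S" using xS yS sub by (simp add: subspace_add subspace_scale)
    have q: "?q ?z = l + 2 * t * (y \<bullet> y) + t\<^sup>2 * ?q y"
    proof -
      have "?q ?z = ?q x + t * (x \<bullet> (A *v y)) + t * (y \<bullet> (A *v x)) + t\<^sup>2 * ?q y"
        by (simp add: matrix_vector_right_distrib matrix_vector_mult_scaleR inner_add_left
            inner_add_right power2_eq_square algebra_simps)
      also have "x \<bullet> (A *v y) = y \<bullet> (A *v x)"
        using sym_inner[OF sym, of x y] by (simp add: inner_commute)
      finally show ?thesis using yAx l_def by simp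
    qed
    have zz: "?z \<bullet> ?z = 1 + t\<^sup>2 * (y \<bullet> y)"
      by (simp add: inner_add_left inner_add_right xx xy inner_commute[of y x] power2_eq_square)
    have "?q ?z \<le> l * (?z \<bullet> ?z)" by (rule hom[OF zS])
    thus ?thesis unfolding q zz by (simp add: algebra_simps)
  qed
  from quad_zero[OF inner_ge_zero this] have "y \<bullet> y = 0" .
  hence "y = 0" by simp
  hence Ax: "A *v x = l *\<^sub>R x" by (simp add: y_def)
  define S' where "S' = S \<inter> {z. x \<bullet> z = 0}"
  have sub': "subspace S'" unfolding S'_def using sub subspace_hyperplane[of x] by (rule subspace_inter)
  have inv': "\<forall>z\<in>S'. A *v z \<in> S'"
  proof
    fix z assume "z \<in> S'"
    hence "z \<in> S" "x \<bullet> z = 0" by (auto simp: S'_def)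
    moreover have "x \<bullet> (A *v z) = (A *v x) \<bullet> z" by (rule sym_inner[OF sym])
    ultimately show "A *v z \<in> S'" using inv by (simp add: S'_def Ax)
  qed
  have spanS: "span (insert x S') = S"
  proof (rule span_subspace)
    show "insert x S' \<subseteq> S" using xS by (auto simp: S'_def)
    show "subspace S" by (rule sub)
    show "S \<subseteq> span (insert x S')"
    proof
      fix z assume zS: "z \<in> S"
      let ?w = "z - (x \<bullet> z) *\<^sub>R x"
      have "?w \<in> S'" using zS xS sub
        by (simp add: S'_def subspace_diff subspace_scale inner_diff_right xx)
      hence "?w \<in> span (insert x S')" by (simp add: span_base)
      moreover have "(x \<bullet> z) *\<^sub>R x \<in> span (insert x S')" by (simp add: span_base span_mul)
      ultimately have "?w + (x \<bullet> z) *\<^sub>R x \<in> span (insert x S')" by (rule span_add)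
      thus "z \<in> span (insert x S')" by simp
    qed
  qed
  have xnS': "x \<notin> S'" using xx by (simp add: S'_def)
  have "x \<notin> span S'" using xnS' sub' by (metis span_eq_iff)
  hence "dim S = dim S' + 1"
    using spanS dim_insert[of x S'] dim_span[of "insert x S'"] by simp
  hence "dim S' = k" using Suc.prems(3) by simp
  from Suc.IH[OF sub' inv' this] obtain B where
    B: "B \<subseteq> S'" "finite B" "card B = k" "pairwise orthogonal B"
       "\<forall>x\<in>B. norm x = 1 \<and> (\<exists>l. A *v x = l *\<^sub>R x)" by blast
  have xnB: "x \<notin> B" using B(1) xnS' by auto
  show ?case
  proof (intro exI[of _ "insert x B"] conjI)
    show "insert x B \<subseteq> S" using B(1) xS by (auto simp: S'_def)
    show "finite (insert x B)" using B(2) by simp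
    show "card (insert x B) = Suc k" using B(2,3) xnB by simp
    show "pairwise orthogonal (insert x B)"
      using B(4) B(1) unfolding pairwise_insert
      by (auto simp: S'_def orthogonal_def inner_commute)
    show "\<forall>z\<in>insert x B. norm z = 1 \<and> (\<exists>l. A *v z = l *\<^sub>R z)"
      using B(5) nx Ax by auto
  qed
qed

definition diagm :: "('n \<Rightarrow> real) \<Rightarrow> real^'n^'n" where
  "diagm d = (\<chi> i j. if i = j then d i else 0)"

lemma spectral:
  fixes A :: "real^'n^'n" assumes sym: "transpose A = A"
  obtains P d where "orthogonal_matrix P" "A = P ** diagm d ** transpose P"
proof -
  have "dim (UNIV :: (real^'n) set) = CARD('n)" by (simp add: dim_UNIV)
  from eigen_basis_sub[OF sym subspace_UNIV _ this] obtain B where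
    B: "finite B" "card B = CARD('n)" "pairwise orthogonal B"
       "\<forall>x\<in>B. norm x = 1 \<and> (\<exists>l. A *v x = l *\<^sub>R x)" by auto
  obtain h where h: "bij_betw h (UNIV::'n set) B"
    using finite_same_card_bij[of "UNIV::'n set" B] B(1,2) by auto
  define P :: "real^'n^'n" where "P = (\<chi> i j. h j $ i)"
  define d where "d j = (SOME l. A *v h j = l *\<^sub>R h j)" for j
  have hB: "h j \<in> B" for j using h by (auto simp: bij_betw_def)
  have colP: "column j P = h j" for j by (simp add: P_def column_def vec_eq_iff)
  have hd: "A *v h j = d j *\<^sub>R h j" for j
    unfolding d_def using B(4) hB[of j] by (metis (mono_tags, lifting) someI_ex)
  have oP: "orthogonal_matrix P"
    unfolding orthogonal_matrix_orthonormal_columns colP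
  proof (intro conjI allI impI)
    show "norm (h i) = 1" for i using B(4) hB by auto
    show "orthogonal (h i) (h j)" if "i \<noteq> j" for i j
    proof -
      have "h i \<noteq> h j" using h that by (auto simp: bij_betw_def inj_on_def)
      thus ?thesis using B(3) hB unfolding pairwise_def by auto
    qed
  qed
  have AP: "A ** P = P ** diagm d"
  proof -
    have "(A ** P) $ i $ j = (P ** diagm d) $ i $ j" for i j
    proof -
      have "(A ** P) $ i $ j = (A *v h j) $ i"
        by (simp add: matrix_matrix_mult_def matrix_vector_mult_def P_def)
      also have "\<dots> = d j * h j $ i" by (simp add: hd)
      also have "\<dots> = (P ** diagm d) $ i $ j"
        by (simp add: matrix_matrix_mult_def diagm_def P_def if_distrib sum.delta' cong: if_cong)
      finally show ?thesis .
    qed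
    thus ?thesis by (simp add: vec_eq_iff)
  qed
  have "A = A ** P ** transpose P"
    using oP by (simp add: orthogonal_matrix_def matrix_mul_assoc[symmetric])
  also have "\<dots> = P ** diagm d ** transpose P" by (simp add: AP)
  finally show ?thesis using that oP by blast
qed



lemma PDPT_entry:
  "(P ** diagm e ** transpose P) $ i $ j = (\<Sum>k\<in>UNIV. P$i$k * e k * P$j$k)"
  by (simp add: matrix_matrix_mult_def diagm_def transpose_def if_distrib sum.delta' cong: if_cong)

lemma PPT_entry:
  assumes "orthogonal_matrix (P::real^'n^'n)"
  shows "(\<Sum>k\<in>UNIV. P$i$k * P$j$k) = (if i = j then 1 else 0)"
proof -
  have "(P ** transpose P) $ i $ j = (mat 1 :: real^'n^'n) $ i $ j"
    using assms by (simp add: orthogonal_matrix_def)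
  thus ?thesis by (simp add: matrix_matrix_mult_def transpose_def mat_def)
qed

lemma PTP_entry:
  assumes "orthogonal_matrix (P::real^'n^'n)"
  shows "(\<Sum>k\<in>UNIV. P$k$i * P$k$j) = (if i = j then 1 else 0)"
proof -
  have "(transpose P ** P) $ i $ j = (mat 1 :: real^'n^'n) $ i $ j"
    using assms by (simp add: orthogonal_matrix_def)
  thus ?thesis by (simp add: matrix_matrix_mult_def transpose_def mat_def)
qed

lemma char_shift:
  fixes P :: "real^'n^'n"
  assumes oP: "orthogonal_matrix P"
  shows "x *\<^sub>R mat 1 - P ** diagm d ** transpose P = P ** diagm (\<lambda>i. x - d i) ** transpose P"
proof -
  have "(x *\<^sub>R mat 1 - P ** diagm d ** transpose P) $ i $ j
        = (P ** diagm (\<lambda>i. x - d i) ** transpose P) $ i $ j" for i j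
  proof -
    have "(P ** diagm (\<lambda>i. x - d i) ** transpose P) $ i $ j
       = x * (\<Sum>k\<in>UNIV. P$i$k * P$j$k) - (\<Sum>k\<in>UNIV. P$i$k * d k * P$j$k)"
      unfolding PDPT_entry by (simp add: sum_distrib_left sum_subtractf algebra_simps)
    also have "\<dots> = (x *\<^sub>R mat 1 - P ** diagm d ** transpose P) $ i $ j"
      unfolding PPT_entry[OF oP] by (simp add: mat_def PDPT_entry)
    finally show ?thesis by simp
  qed
  thus ?thesis by (simp add: vec_eq_iff)
qed

lemma det_PDPT:
  fixes P :: "real^'n^'n"
  assumes oP: "orthogonal_matrix P"
  shows "det (P ** diagm e ** transpose P) = (\<Prod>i\<in>UNIV. e i)"
proof -
  have "det P * det P = 1"
  proof -
    have "det (P ** transpose P) = det (mat 1 :: real^'n^'n)" using oP by (simp add: orthogonal_matrix_def)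
    thus ?thesis by (simp add: det_mul det_transpose)
  qed
  moreover have "det (diagm e) = (\<Prod>i\<in>UNIV. e i)"
    by (subst det_diagonal) (auto simp: diagm_def)
  ultimately show ?thesis by (simp add: det_mul det_transpose algebra_simps)
qed

lemma prod_linear_mset_inj:
  "(\<Prod>l\<in>#M. [:-l, 1::real:]) = (\<Prod>l\<in>#N. [:-l, 1:]) \<Longrightarrow> M = N"
proof (induction M arbitrary: N)
  case empty
  show ?case
  proof (rule ccontr)
    assume "{#} \<noteq> N"
    then obtain c where "c \<in># N" by (metis multiset_nonemptyE)
    hence "poly (\<Prod>l\<in>#N. [:-l, 1::real:]) c = 0"
      by (auto simp: poly_prod_mset prod_mset_zero_iff)
    with empty.prems show False by simp
  qed
next
  case (add x M)
  have "poly (\<Prod>l\<in>#add_mset x M. [:-l, 1::real:]) x = 0" by (simp add: poly_prod_mset)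
  hence "poly (\<Prod>l\<in>#N. [:-l, 1::real:]) x = 0" unfolding add.prems .
  hence "x \<in># N" by (auto simp: poly_prod_mset prod_mset_zero_iff)
  then obtain N' where N: "N = add_mset x N'" by (metis multi_member_split)
  have "[:-x, 1:] * (\<Prod>l\<in>#M. [:-l, 1::real:]) = [:-x, 1:] * (\<Prod>l\<in>#N'. [:-l, 1:])"
    using add.prems by (simp add: N)
  moreover have "[:-x, 1::real:] \<noteq> 0" by simp
  ultimately have "(\<Prod>l\<in>#M. [:-l, 1::real:]) = (\<Prod>l\<in>#N'. [:-l, 1:])"
    using mult_left_cancel by blast
  from add.IH[OF this] show ?case by (simp add: N)
qed

lemma prod_list_mset: "prod_list (map f xs) = (\<Prod>l\<in>#mset xs. f l)"
  by (simp flip: prod_mset_prod_list)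

lemma sum_list_mset: "sum_list (map f xs) = (\<Sum>l\<in>#mset xs. f l)"
  by (simp flip: sum_mset_sum_list)

lemma sorted_prod_unique:
  fixes xs ys :: "real list"
  assumes "sorted xs" "sorted ys" "\<forall>x. (\<Prod>l\<leftarrow>xs. x - l) = (\<Prod>l\<leftarrow>ys. x - l)"
  shows "xs = ys"
proof -
  have "poly (\<Prod>l\<in>#mset xs. [:-l, 1::real:]) = poly (\<Prod>l\<in>#mset ys. [:-l, 1::real:])"
  proof
    fix x
    show "poly (\<Prod>l\<in>#mset xs. [:-l, 1::real:]) x = poly (\<Prod>l\<in>#mset ys. [:-l, 1::real:]) x"
      using assms(3) by (simp add: poly_prod_mset prod_list_mset)
  qed
  hence "mset xs = mset ys" by (intro prod_linear_mset_inj) (simp add: poly_eq_poly_eq_iff)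
  thus ?thesis using assms(1,2) by (metis properties_for_sort sorted_sort_id)
qed

definition evl :: "('n::finite \<Rightarrow> real) \<Rightarrow> real list" where
  "evl d = sorted_list_of_multiset (image_mset d (mset_set (UNIV::'n set)))"

lemma eigvals_PDPT:
  fixes P :: "real^'n^'n"
  assumes oP: "orthogonal_matrix P"
  shows "eigvals (P ** diagm d ** transpose P) = evl d"
  unfolding eigvals_def
proof (rule the_equality)
  show "length (evl d) = CARD('n) \<and> sorted (evl d) \<and>
     (\<forall>x. det (x *\<^sub>R mat 1 - P ** diagm d ** transpose P) = (\<Prod>l\<leftarrow>evl d. x - l))"
  proof (intro conjI allI)
    show "length (evl d) = CARD('n)"
      unfolding evl_def by (metis mset_sorted_list_of_multiset size_image_mset size_mset size_mset_set)
    show "sorted (evl d)" by (simp add: evl_def)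
    fix x
    show "det (x *\<^sub>R mat 1 - P ** diagm d ** transpose P) = (\<Prod>l\<leftarrow>evl d. x - l)"
      unfolding char_shift[OF oP] det_PDPT[OF oP] prod_list_mset evl_def
      by (simp add: prod_unfold_prod_mset image_mset.compositionality o_def)
  qed
next
  fix xs
  assume H: "length xs = CARD('n) \<and> sorted xs \<and>
     (\<forall>x. det (x *\<^sub>R mat 1 - P ** diagm d ** transpose P) = (\<Prod>l\<leftarrow>xs. x - l))"
  have "\<forall>x. (\<Prod>l\<leftarrow>xs. x - l) = (\<Prod>l\<leftarrow>evl d. x - l)"
  proof
    fix x
    have "(\<Prod>l\<leftarrow>evl d. x - l) = det (x *\<^sub>R mat 1 - P ** diagm d ** transpose P)"
      unfolding char_shift[OF oP] det_PDPT[OF oP] prod_list_mset evl_def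
      by (simp add: prod_unfold_prod_mset image_mset.compositionality o_def)
    thus "(\<Prod>l\<leftarrow>xs. x - l) = (\<Prod>l\<leftarrow>evl d. x - l)" using H by simp
  qed
  thus "xs = evl d" using H by (intro sorted_prod_unique) (auto simp: evl_def)
qed

lemma sum_evl: "sum_list (map G (evl d)) = (\<Sum>i\<in>UNIV. G (d i))"
  unfolding sum_list_mset evl_def
  by (simp add: sum_unfold_sum_mset image_mset.compositionality o_def)



definition qf :: "real^'n^'n \<Rightarrow> real^'n^'n \<Rightarrow> 'n \<Rightarrow> real" where
  "qf Q X i = (transpose Q ** X ** Q) $ i $ i"

lemma qf_sum: "qf Q X i = (\<Sum>r\<in>UNIV. \<Sum>s\<in>UNIV. Q$r$i * X$r$s * Q$s$i)"
  apply (simp add: qf_def matrix_matrix_mult_def transpose_def sum_distrib_left sum_distrib_right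
      algebra_simps)
  apply (rule trans[OF sum.swap])
  apply (simp add: mult.left_commute)
  done

lemma conj_diag:
  fixes P :: "real^'n^'n"
  assumes "orthogonal_matrix P"
  shows "transpose P ** (P ** D ** transpose P) ** P = D"
proof -
  have "transpose P ** (P ** D ** transpose P) ** P = (transpose P ** P) ** D ** (transpose P ** P)"
    by (simp add: matrix_mul_assoc)
  also have "\<dots> = D" using assms by (simp add: orthogonal_matrix_def)
  finally show ?thesis .
qed

lemma qf_inner: "qf Q X i = column i Q \<bullet> (X *v column i Q)"
  by (simp add: qf_sum inner_vec_def matrix_vector_mult_def column_def sum_distrib_left algebra_simps)

lemma qf_lin: "qf Q (u *\<^sub>R A + v *\<^sub>R B) i = u * qf Q A i + v * qf Q B i"
  by (simp add: qf_sum sum_distrib_left sum.distrib algebra_simps)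

lemma pd_convex: "convex (pos_def_sym :: (real^'n^'n) set)"
  unfolding convex_def
proof (intro ballI allI impI)
  fix A B :: "real^'n^'n" and u v :: real
  assume A: "A \<in> pos_def_sym" and B: "B \<in> pos_def_sym" and uv: "0 \<le> u" "0 \<le> v" "u + v = 1"
  have "transpose (u *\<^sub>R A + v *\<^sub>R B) = u *\<^sub>R A + v *\<^sub>R B"
    using A B by (simp add: pos_def_sym_def vec_eq_iff transpose_def)
  moreover have "x \<bullet> ((u *\<^sub>R A + v *\<^sub>R B) *v x) > 0" if "x \<noteq> 0" for x
  proof -
    have a: "x \<bullet> (A *v x) > 0" and b: "x \<bullet> (B *v x) > 0" using A B that by (auto simp: pos_def_sym_def)
    have "x \<bullet> ((u *\<^sub>R A + v *\<^sub>R B) *v x) = u * (x \<bullet> (A *v x)) + v * (x \<bullet> (B *v x))"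
      by (simp add: matrix_vector_mult_add_rdistrib inner_add_right flip: scaleR_matrix_vector_assoc)
    also have "\<dots> > 0"
    proof (cases "u = 0")
      case True then show ?thesis using uv b by simp
    next
      case False then have "u > 0" using uv by simp
      thus ?thesis using a b uv by (simp add: add_pos_nonneg)
    qed
    finally show ?thesis .
  qed
  ultimately show "u *\<^sub>R A + v *\<^sub>R B \<in> pos_def_sym" by (simp add: pos_def_sym_def)
qed

lemma pd_decomp:
  fixes A :: "real^'n^'n"
  assumes "A \<in> pos_def_sym"
  obtains P a where "orthogonal_matrix P" "\<And>i. a i > 0" "A = P ** diagm a ** transpose P"
proof -
  have sym: "transpose A = A" using assms by (simp add: pos_def_sym_def)
  obtain P a where oP: "orthogonal_matrix P" and A: "A = P ** diagm a ** transpose P"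
    using spectral[OF sym] by blast
  have "a i > 0" for i
  proof -
    have "transpose P ** A ** P = diagm a"
      using oP unfolding A by (rule conj_diag)
    hence "a i = qf P A i" by (simp add: qf_def diagm_def)
    also have "\<dots> = column i P \<bullet> (A *v column i P)" by (rule qf_inner)
    also have "\<dots> > 0"
    proof -
      have "norm (column i P) = 1" using oP by (simp add: orthogonal_matrix_orthonormal_columns)
      hence "column i P \<noteq> 0" by auto
      thus ?thesis using assms by (simp add: pos_def_sym_def)
    qed
    finally show ?thesis .
  qed
  thus ?thesis using that oP A by blast
qed

lemma qf_PDPT:
  fixes P Q :: "real^'n^'n"
  shows "qf Q (P ** diagm a ** transpose P) i = (\<Sum>k\<in>UNIV. ((transpose Q ** P)$i$k)\<^sup>2 * a k)"
proof -
  let ?R = "transpose Q ** P"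
  have "transpose Q ** (P ** diagm a ** transpose P) ** Q = ?R ** diagm a ** transpose ?R"
    by (simp add: matrix_transpose_mul matrix_mul_assoc)
  thus ?thesis by (simp add: qf_def PDPT_entry power2_eq_square algebra_simps)
qed

lemma schur_jensen:
  fixes P Q :: "real^'n^'n"
  assumes G: "concave_on {0<..} G" and oP: "orthogonal_matrix P" and oQ: "orthogonal_matrix Q"
    and a: "\<And>i. a i > 0"
  shows "(\<Sum>i\<in>UNIV. G (qf Q (P ** diagm a ** transpose P) i)) \<ge> (\<Sum>k\<in>UNIV. G (a k))"
proof -
  let ?R = "transpose Q ** P"
  have oR: "orthogonal_matrix ?R" using oP oQ by (simp add: orthogonal_matrix_mul)
  have w1: "(\<Sum>k\<in>UNIV. (?R$i$k)\<^sup>2) = 1" for i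
    using PPT_entry[OF oR, of i i] by (simp add: power2_eq_square)
  have w2: "(\<Sum>i\<in>UNIV. (?R$i$k)\<^sup>2) = 1" for k
    using PTP_entry[OF oR, of k k] by (simp add: power2_eq_square)
  have "(\<Sum>k\<in>UNIV. G (a k)) = (\<Sum>k\<in>UNIV. \<Sum>i\<in>UNIV. (?R$i$k)\<^sup>2 * G (a k))"
    by (simp add: w2 flip: sum_distrib_right)
  also have "\<dots> = (\<Sum>i\<in>UNIV. \<Sum>k\<in>UNIV. (?R$i$k)\<^sup>2 * G (a k))" by (rule sum.swap)
  also have "\<dots> \<le> (\<Sum>i\<in>UNIV. G (\<Sum>k\<in>UNIV. (?R$i$k)\<^sup>2 *\<^sub>R a k))"
  proof (rule sum_mono)
    fix i
    show "(\<Sum>k\<in>UNIV. (?R$i$k)\<^sup>2 * G (a k)) \<le> G (\<Sum>k\<in>UNIV. (?R$i$k)\<^sup>2 *\<^sub>R a k)"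
      by (rule concave_on_sum[OF _ UNIV_not_empty G w1]) (auto simp: a)
  qed
  also have "\<dots> = (\<Sum>i\<in>UNIV. G (qf Q (P ** diagm a ** transpose P) i))"
    by (simp add: qf_PDPT)
  finally show ?thesis .
qed

lemma spectral_concave:
  assumes G: "concave_on {0<..} G"
    and Phi: "\<And>A P a. A \<in> pos_def_sym \<Longrightarrow> orthogonal_matrix P \<Longrightarrow> (\<forall>i. a i > 0) \<Longrightarrow>
       A = P ** diagm a ** transpose P \<Longrightarrow> Phi A = (\<Sum>i\<in>UNIV. G (a i))"
  shows "concave_on (pos_def_sym :: (real^'n^'n) set) Phi"
  unfolding concave_on_iff
proof (intro conjI pd_convex ballI allI impI)
  fix A B :: "real^'n^'n" and u v :: real
  assume A: "A \<in> pos_def_sym" and B: "B \<in> pos_def_sym" and uv: "0 \<le> u" "0 \<le> v" "u + v = 1"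
  have C: "u *\<^sub>R A + v *\<^sub>R B \<in> pos_def_sym" using pd_convex A B uv unfolding convex_def by blast
  obtain P a where oP: "orthogonal_matrix P" and a: "\<And>i. a i > 0" and Ad: "A = P ** diagm a ** transpose P"
    using pd_decomp[OF A] by blast
  obtain P' b where oP': "orthogonal_matrix P'" and b: "\<And>i. b i > 0" and Bd: "B = P' ** diagm b ** transpose P'"
    using pd_decomp[OF B] by blast
  obtain Q c where oQ: "orthogonal_matrix Q" and c: "\<And>i. c i > 0"
     and Cd: "u *\<^sub>R A + v *\<^sub>R B = Q ** diagm c ** transpose Q"
    using pd_decomp[OF C] by blast
  have ci: "c i = u * qf Q A i + v * qf Q B i" for i
  proof -
    have "transpose Q ** (u *\<^sub>R A + v *\<^sub>R B) ** Q = diagm c"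
      using oQ unfolding Cd by (rule conj_diag)
    hence "c i = qf Q (u *\<^sub>R A + v *\<^sub>R B) i" by (simp add: qf_def diagm_def)
    thus ?thesis by (simp add: qf_lin)
  qed
  have qpos: "qf Q X i > 0" if "X \<in> pos_def_sym" for X i
  proof -
    have "norm (column i Q) = 1" using oQ by (simp add: orthogonal_matrix_orthonormal_columns)
    hence "column i Q \<noteq> 0" by auto
    thus ?thesis using that by (simp add: pos_def_sym_def qf_inner)
  qed
  have "u * Phi A + v * Phi B = u * (\<Sum>k\<in>UNIV. G (a k)) + v * (\<Sum>k\<in>UNIV. G (b k))"
    using Phi[OF A oP _ Ad] Phi[OF B oP' _ Bd] a b by simp
  also have "\<dots> \<le> u * (\<Sum>i\<in>UNIV. G (qf Q A i)) + v * (\<Sum>i\<in>UNIV. G (qf Q B i))"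
    using schur_jensen[OF G oP oQ a] schur_jensen[OF G oP' oQ b] uv Ad Bd
    by (intro add_mono mult_left_mono) auto
  also have "\<dots> = (\<Sum>i\<in>UNIV. u * G (qf Q A i) + v * G (qf Q B i))"
    by (simp add: sum.distrib sum_distrib_left)
  also have "\<dots> \<le> (\<Sum>i\<in>UNIV. G (c i))"
  proof (rule sum_mono)
    fix i
    have "G (u *\<^sub>R qf Q A i + v *\<^sub>R qf Q B i) \<ge> u * G (qf Q A i) + v * G (qf Q B i)"
      using G qpos[OF A] qpos[OF B] uv unfolding concave_on_iff by auto
    thus "u * G (qf Q A i) + v * G (qf Q B i) \<le> G (c i)" by (simp add: ci)
  qed
  also have "\<dots> = Phi (u *\<^sub>R A + v *\<^sub>R B)" using Phi[OF C oQ _ Cd] c by simp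
  finally show "u * Phi A + v * Phi B \<le> Phi (u *\<^sub>R A + v *\<^sub>R B)" .
qed



locale gfun =
  fixes g g' :: "real \<Rightarrow> real" and U V W e :: real
  assumes U: "U > 0" and V: "V > 0" and W: "W > 0" and e: "e > 0"
  and der: "\<And>x. 0 \<le> x \<Longrightarrow> (g has_real_derivative g' x) (at x)"
  and pos: "\<And>x. 0 \<le> x \<Longrightarrow> g' x > 0"
  and ub: "\<And>x. 0 \<le> x \<Longrightarrow> g' x \<le> U"
  and ub2: "\<And>x. 0 \<le> x \<Longrightarrow> g' x * x\<^sup>2 \<le> V"
  and lb: "\<And>x. 0 \<le> x \<Longrightarrow> W / (x + e)\<^sup>2 \<le> g' x"
  and dec: "\<And>x y. 0 \<le> x \<Longrightarrow> x \<le> y \<Longrightarrow> g' y \<le> g' x"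
  and inc2: "\<And>x y. 0 \<le> x \<Longrightarrow> x \<le> y \<Longrightarrow> g' x * x\<^sup>2 \<le> g' y * y\<^sup>2"
begin

lemma strict: "0 \<le> x \<Longrightarrow> x < y \<Longrightarrow> g x < g y"
proof -
  assume "0 \<le> x" "x < y"
  show ?thesis
  proof (rule DERIV_pos_imp_increasing[OF \<open>x < y\<close>])
    fix z assume "x \<le> z" "z \<le> y"
    hence "0 \<le> z" using \<open>0 \<le> x\<close> by simp
    thus "\<exists>y. (g has_real_derivative y) (at z) \<and> 0 < y" using der pos by blast
  qed
qed

lemma le_iff: assumes "0 \<le> x" "0 \<le> y" shows "g x \<le> g y \<longleftrightarrow> x \<le> y"
proof
  assume H: "g x \<le> g y"
  show "x \<le> y"
  proof (rule ccontr)
    assume "\<not> x \<le> y" then have "y < x" by simp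
    from strict[OF assms(2) this] H show False by simp
  qed
next
  assume H: "x \<le> y"
  show "g x \<le> g y"
  proof (cases "x = y")
    case True thus ?thesis by simp
  next
    case False with H have "x < y" by simp
    from strict[OF assms(1) this] show ?thesis by simp
  qed
qed

lemma conc: "concave_on {0<..} g"
proof -
  have "convex_on {0<..} (\<lambda>x. - g x)"
  proof (rule convex_on_realI[where f' = "\<lambda>x. - g' x"])
    show "connected {0::real<..}" by simp
    show "((\<lambda>x. - g x) has_real_derivative - g' x) (at x)" if "x \<in> {0<..}" for x
      using der[of x] that by (auto intro: derivative_intros)
    show "- g' x \<le> - g' y" if "x \<in> {0<..}" "y \<in> {0<..}" "x \<le> y" for x y
      using dec[of x y] that by simp
  qed
  thus ?thesis by (simp add: concave_on_def)
qed

lemma conc_inv: "concave_on {0<..} (\<lambda>x. - g (1 / x))"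
proof -
  have "convex_on {0<..} (\<lambda>x. g (1 / x))"
  proof (rule convex_on_realI[where f' = "\<lambda>x. - (g' (1/x) * (1/x)\<^sup>2)"])
    show "connected {0::real<..}" by simp
    show "((\<lambda>x. g (1 / x)) has_real_derivative - (g' (1/x) * (1/x)\<^sup>2)) (at x)"
      if "x \<in> {0<..}" for x
    proof -
      have x: "x > 0" using that by simp
      have d1: "((\<lambda>x. 1 / x) has_real_derivative - ((1/x)\<^sup>2)) (at x)"
        using DERIV_inverse[of x UNIV] x by (simp add: inverse_eq_divide power2_eq_square)
      have "g' (1/x) * - ((1/x)\<^sup>2) = - (g' (1/x) * (1/x)\<^sup>2)" by simp
      thus ?thesis using DERIV_chain2[OF der d1] x by simp
    qed
    show "- (g' (1/x) * (1/x)\<^sup>2) \<le> - (g' (1/y) * (1/y)\<^sup>2)"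
      if "x \<in> {0<..}" "y \<in> {0<..}" "x \<le> y" for x y
    proof -
      have "1/y \<le> 1/x" using that by (simp add: frac_le)
      hence "g' (1/y) * (1/y)\<^sup>2 \<le> g' (1/x) * (1/x)\<^sup>2"
        using that by (intro inc2) auto
      thus ?thesis by simp
    qed
  qed
  thus ?thesis by (simp add: concave_on_def)
qed

lemma upd: assumes "i < length xs" shows
  "sum_list (map g (xs[i := t])) = sum_list (map g xs) - g (xs ! i) + g t"
proof -
  have "sum_list ((map g xs)[i := g t]) = sum_list (map g xs) + g t - map g xs ! i"
    using assms proof (induction xs arbitrary: i)
      case Nil then show ?case by simp
    next
      case (Cons a xs) then show ?case by (cases i) auto
    qed
  thus ?thesis using assms by (simp add: map_update)
qed

lemma upd_der:
  assumes "i < length xs" "0 \<le> xs ! i"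
  shows "((\<lambda>t. sum_list (map g (xs[i := t]))) has_real_derivative g' (xs ! i)) (at (xs ! i))"
proof -
  have "((\<lambda>t. sum_list (map g xs) - g (xs ! i) + g t) has_real_derivative g' (xs ! i)) (at (xs ! i))"
    using der[OF assms(2)] by (auto intro!: derivative_eq_intros)
  thus ?thesis using upd[OF assms(1)] by simp
qed

lemma upd_deriv:
  assumes "i < length xs" "0 \<le> xs ! i"
  shows "deriv (\<lambda>t. sum_list (map g (xs[i := t]))) (xs ! i) = g' (xs ! i)"
  by (rule DERIV_imp_deriv[OF upd_der[OF assms]])

lemma sorted_nonneg:
  assumes "sorted xs" "0 \<le> xs ! 0" "i < length xs"
  shows "0 \<le> xs ! i" "xs ! 0 \<le> xs ! i" "xs ! i \<le> xs ! (length xs - 1)"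
  using sorted_nth_mono[OF assms(1), of 0 i] sorted_nth_mono[OF assms(1), of i "length xs - 1"] assms
  by auto

lemma lower_upper:
  assumes "sorted xs" "0 \<le> xs ! 0" "length xs = n"
  shows "real n * g (xs ! 0) \<le> sum_list (map g xs)"
    and "sum_list (map g xs) \<le> real n * g (xs ! (n - 1))"
proof -
  have sl: "sum_list (map g xs) = (\<Sum>i<n. g (xs ! i))"
    using assms(3) by (simp add: sum_list_sum_nth atLeast0LessThan)
  have "(\<Sum>i<n. g (xs ! 0)) \<le> (\<Sum>i<n. g (xs ! i))"
    using sorted_nonneg[OF assms(1,2)] assms(3) assms(2) by (intro sum_mono) (simp add: le_iff)
  thus "real n * g (xs ! 0) \<le> sum_list (map g xs)" using sl by simp
  have "(\<Sum>i<n. g (xs ! i)) \<le> (\<Sum>i<n. g (xs ! (n - 1)))"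
    using sorted_nonneg[OF assms(1,2)] assms(3) by (intro sum_mono) (simp add: le_iff)
  thus "sum_list (map g xs) \<le> real n * g (xs ! (n - 1))" using sl by simp
qed

end



lemma gfun_from_den:
  fixes g Den :: "real \<Rightarrow> real" and k m e :: real
  assumes k: "k > 0" and m: "m > 0" and e: "e > 0"
    and der: "\<And>x. 0 \<le> x \<Longrightarrow> (g has_real_derivative k / Den x) (at x)"
    and Dm: "\<And>x. 0 \<le> x \<Longrightarrow> m \<le> Den x"
    and Dx: "\<And>x. 0 \<le> x \<Longrightarrow> x\<^sup>2 \<le> Den x"
    and De: "\<And>x. 0 \<le> x \<Longrightarrow> Den x \<le> 2 * (x + e)\<^sup>2"
    and Dmono: "\<And>x y. 0 \<le> x \<Longrightarrow> x \<le> y \<Longrightarrow> Den x \<le> Den y"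
    and Dinc: "\<And>x y. 0 \<le> x \<Longrightarrow> x \<le> y \<Longrightarrow> x\<^sup>2 * Den y \<le> y\<^sup>2 * Den x"
  shows "gfun g (\<lambda>x. k / Den x) (k / m) k (k / 2) e"
proof
  have Dp: "0 \<le> x \<Longrightarrow> Den x > 0" for x using Dm[of x] m by simp
  show "k / m > 0" "k > 0" "k / 2 > 0" "e > 0" using k m e by auto
  show "(g has_real_derivative k / Den x) (at x)" if "0 \<le> x" for x using der that .
  show "k / Den x > 0" if "0 \<le> x" for x using Dp[OF that] k by simp
  show "k / Den x \<le> k / m" if "0 \<le> x" for x
    using Dm[OF that] m k by (intro divide_left_mono) auto
  show "k / Den x * x\<^sup>2 \<le> k" if x: "0 \<le> x" for x
  proof -
    have "k * x\<^sup>2 \<le> k * Den x" using Dx[OF x] k by (intro mult_left_mono) auto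
    thus ?thesis using Dp[OF x] by (simp add: field_simps)
  qed
  show "k / 2 / (x + e)\<^sup>2 \<le> k / Den x" if x: "0 \<le> x" for x
  proof -
    have "k / (2 * (x + e)\<^sup>2) \<le> k / Den x"
    proof (rule divide_left_mono)
      show "Den x \<le> 2 * (x + e)\<^sup>2" "0 \<le> k" using De[OF x] k by auto
      have "(x + e)\<^sup>2 > 0" using x e by simp
      thus "0 < 2 * (x + e)\<^sup>2 * Den x" using Dp[OF x] by simp
    qed
    thus ?thesis by simp
  qed
  show "k / Den y \<le> k / Den x" if "0 \<le> x" "x \<le> y" for x y
    using Dmono[OF that] Dp that k by (intro divide_left_mono) auto
  show "k / Den x * x\<^sup>2 \<le> k / Den y * y\<^sup>2" if xy: "0 \<le> x" "x \<le> y" for x y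
  proof -
    have px: "Den x > 0" and py: "Den y > 0" using Dp xy by auto
    have "k * (x\<^sup>2 * Den y) \<le> k * (y\<^sup>2 * Den x)" using Dinc[OF xy] k by (intro mult_left_mono) auto
    thus ?thesis using px py by (simp add: field_simps)
  qed
qed

lemma h1: "(p::real) > 0 \<Longrightarrow> q > 0 \<Longrightarrow> 1 / (p / q) * (k / q\<^sup>2) = k / (p * q)"
  by (simp add: field_simps power2_eq_square)

lemma h2: "(q::real) > 0 \<Longrightarrow> S > 0 \<Longrightarrow> inverse (S / q\<^sup>2) * (k / q\<^sup>2) = k / S"
  by (simp add: field_simps power2_eq_square)

lemma gfun_ln:
  fixes c d :: real
  assumes c: "0 < c" and cd: "c < d"
  shows "gfun (\<lambda>x. ln ((x + c) / (x + d))) (\<lambda>x. (d - c) / ((x + c) * (x + d)))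
           ((d - c) / (c * d)) (d - c) ((d - c) / 2) d"
proof (rule gfun_from_den)
  show "d - c > 0" "c * d > 0" "d > 0" using c cd by auto
  show "((\<lambda>x. ln ((x + c) / (x + d))) has_real_derivative (d - c) / ((x + c) * (x + d))) (at x)"
    if "0 \<le> x" for x
  proof -
    have xc: "x + c > 0" and xd: "x + d > 0" using that c cd by auto
    have q: "((\<lambda>x. (x + c) / (x + d)) has_real_derivative (d - c) / (x + d)\<^sup>2) (at x)"
      using xd by (auto intro!: derivative_eq_intros simp: power2_eq_square algebra_simps)
    have u: "(x + c) / (x + d) > 0" using xc xd by simp
    have "((\<lambda>x. ln ((x + c) / (x + d))) has_real_derivative
           (1 / ((x + c) / (x + d))) * ((d - c) / (x + d)\<^sup>2)) (at x)"
      by (rule DERIV_chain2[OF DERIV_ln_divide[OF u] q])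
    moreover have "(1 / ((x + c) / (x + d))) * ((d - c) / (x + d)\<^sup>2) = (d - c) / ((x + c) * (x + d))"
      using h1[OF xc xd] by simp
    ultimately show ?thesis by simp
  qed
  fix x :: real assume x: "0 \<le> x"
  show "c * d \<le> (x + c) * (x + d)" using x c cd by (simp add: algebra_simps add_nonneg_nonneg mult_nonneg_nonneg)
  show "x\<^sup>2 \<le> (x + c) * (x + d)" using x c cd
    by (simp add: algebra_simps power2_eq_square add_nonneg_nonneg mult_nonneg_nonneg)
  have "(x + c) * (x + d) \<le> (x + d) * (x + d)" using x cd c by (intro mult_right_mono) auto
  also have "\<dots> \<le> 2 * (x + d)\<^sup>2" by (simp add: power2_eq_square)
  finally show "(x + c) * (x + d) \<le> 2 * (x + d)\<^sup>2" .
next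
  fix x y :: real assume xy: "0 \<le> x" "x \<le> y"
  show "(x + c) * (x + d) \<le> (y + c) * (y + d)" using xy c cd
    by (intro mult_mono) auto
  have id: "y\<^sup>2 * ((x + c) * (x + d)) - x\<^sup>2 * ((y + c) * (y + d))
          = (c + d) * (x * y * (y - x)) + c * d * (y * y - x * x)"
    by (simp add: algebra_simps power2_eq_square)
  have "x * y * (y - x) \<ge> 0" using xy by simp
  moreover have "y * y - x * x \<ge> 0" using xy by (simp add: mult_mono)
  ultimately have "(c + d) * (x * y * (y - x)) + c * d * (y * y - x * x) \<ge> 0"
    using c cd xy by (intro add_nonneg_nonneg mult_nonneg_nonneg) auto
  thus "x\<^sup>2 * ((y + c) * (y + d)) \<le> y\<^sup>2 * ((x + c) * (x + d))" using id by linarith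
qed

lemma gfun_atan:
  fixes c d :: real
  assumes d: "0 < d" and cd: "c < d" and cpd: "0 < c + d"
  shows "gfun (\<lambda>x. arctan ((x + c) / (x + d))) (\<lambda>x. (d - c) / ((x + c)\<^sup>2 + (x + d)\<^sup>2))
           ((d - c) / (d\<^sup>2)) (d - c) ((d - c) / 2) (d + \<bar>c\<bar>)"
proof (rule gfun_from_den)
  show "d - c > 0" "d\<^sup>2 > 0" "d + \<bar>c\<bar> > 0" using d cd by auto
  show "((\<lambda>x. arctan ((x + c) / (x + d))) has_real_derivative (d - c) / ((x + c)\<^sup>2 + (x + d)\<^sup>2)) (at x)"
    if "0 \<le> x" for x
  proof -
    have xd: "x + d > 0" using that d by auto
    have S: "(x + c)\<^sup>2 + (x + d)\<^sup>2 > 0" using xd by (simp add: add_nonneg_pos)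
    have q: "((\<lambda>x. (x + c) / (x + d)) has_real_derivative (d - c) / (x + d)\<^sup>2) (at x)"
      using xd by (auto intro!: derivative_eq_intros simp: power2_eq_square algebra_simps)
    have "((\<lambda>x. arctan ((x + c) / (x + d))) has_real_derivative
           inverse (1 + ((x + c) / (x + d))\<^sup>2) * ((d - c) / (x + d)\<^sup>2)) (at x)"
      by (rule DERIV_chain2[OF DERIV_arctan q])
    moreover have "1 + ((x + c) / (x + d))\<^sup>2 = ((x + c)\<^sup>2 + (x + d)\<^sup>2) / (x + d)\<^sup>2"
      using xd by (simp add: field_simps power_divide)
    moreover have "inverse (((x + c)\<^sup>2 + (x + d)\<^sup>2) / (x + d)\<^sup>2) * ((d - c) / (x + d)\<^sup>2)
        = (d - c) / ((x + c)\<^sup>2 + (x + d)\<^sup>2)"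
      using h2[OF xd S] by simp
    ultimately show ?thesis by simp
  qed
  fix x :: real assume x: "0 \<le> x"
  have xd: "x\<^sup>2 \<le> (x + d)\<^sup>2" using x d by (intro power_mono) auto
  have dd: "d\<^sup>2 \<le> (x + d)\<^sup>2" using x d by (intro power_mono) auto
  show "d\<^sup>2 \<le> (x + c)\<^sup>2 + (x + d)\<^sup>2" using dd zero_le_power2[of "x + c"] by linarith
  show "x\<^sup>2 \<le> (x + c)\<^sup>2 + (x + d)\<^sup>2" using xd zero_le_power2[of "x + c"] by linarith
  have "(x + c)\<^sup>2 \<le> (x + (d + \<bar>c\<bar>))\<^sup>2"
  proof -
    have "\<bar>x + c\<bar> \<le> x + (d + \<bar>c\<bar>)" using x d by linarith
    hence "\<bar>x + c\<bar>\<^sup>2 \<le> (x + (d + \<bar>c\<bar>))\<^sup>2" by (intro power_mono) auto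
    thus ?thesis by simp
  qed
  moreover have "(x + d)\<^sup>2 \<le> (x + (d + \<bar>c\<bar>))\<^sup>2" using x d by (intro power_mono) auto
  ultimately show "(x + c)\<^sup>2 + (x + d)\<^sup>2 \<le> 2 * (x + (d + \<bar>c\<bar>))\<^sup>2" by simp
next
  fix x y :: real assume xy: "0 \<le> x" "x \<le> y"
  have id1: "((y + c)\<^sup>2 + (y + d)\<^sup>2) - ((x + c)\<^sup>2 + (x + d)\<^sup>2) = (y - x) * (2 * x + 2 * y + 2 * (c + d))"
    by (simp add: algebra_simps power2_eq_square)
  have "(y - x) * (2 * x + 2 * y + 2 * (c + d)) \<ge> 0" using xy cpd by (intro mult_nonneg_nonneg) auto
  thus "(x + c)\<^sup>2 + (x + d)\<^sup>2 \<le> (y + c)\<^sup>2 + (y + d)\<^sup>2" using id1 by linarith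
  have id: "y\<^sup>2 * ((x + c)\<^sup>2 + (x + d)\<^sup>2) - x\<^sup>2 * ((y + c)\<^sup>2 + (y + d)\<^sup>2)
          = 2 * (c + d) * (x * y * (y - x)) + (c * c + d * d) * (y * y - x * x)"
    by (simp add: algebra_simps power2_eq_square)
  have "x * y * (y - x) \<ge> 0" using xy by simp
  moreover have "y * y - x * x \<ge> 0" using xy by (simp add: mult_mono)
  ultimately have "2 * (c + d) * (x * y * (y - x)) + (c * c + d * d) * (y * y - x * x) \<ge> 0"
  proof -
    assume h1: "x * y * (y - x) \<ge> 0" and h2: "y * y - x * x \<ge> 0"
    have "2 * (c + d) * (x * y * (y - x)) \<ge> 0" using cpd h1 by simp
    moreover have "(c * c + d * d) * (y * y - x * x) \<ge> 0" using h2 by simp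
    ultimately show ?thesis by linarith
  qed
  thus "x\<^sup>2 * ((y + c)\<^sup>2 + (y + d)\<^sup>2) \<le> y\<^sup>2 * ((x + c)\<^sup>2 + (x + d)\<^sup>2)" using id by linarith
qed



lemma g_tau_gfun:
  assumes tau: "(0 < tau \<and> tau < pi / 4) \<or> (pi / 4 < tau \<and> tau < pi / 2)"
  shows "\<exists>g' U V W e. gfun (g_tau tau) g' U V W e"
proof -
  define a where "a = cot tau"
  define b where "b = b_par tau"
  have bdef: "b = sqrt \<bar>a\<^sup>2 - 1\<bar>" by (simp add: a_def b_def b_par_def)
  have gt: "g_tau tau x = (if tau < pi / 4 then ln ((x + (a - b)) / (x + (a + b)))
             else arctan ((x + (a - b)) / (x + (a + b))))" for x
    by (simp add: g_tau_def a_def b_def a_par_def algebra_simps)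
  have cot_inv: "a = inverse (tan tau)" by (simp add: a_def cot_altdef)
  from tau show ?thesis
  proof
    assume t: "0 < tau \<and> tau < pi / 4"
    have "tan tau < tan (pi / 4)" using t by (intro tan_monotone) auto
    hence t1: "tan tau < 1" by (simp add: tan_45)
    have t0: "tan tau > 0" using t by (intro tan_gt_zero) auto
    have a1: "a > 1" using t0 t1 by (simp add: cot_inv one_less_inverse)
    have "a\<^sup>2 > 1" using a1 by (metis less_1_mult power2_eq_square)
    hence bb: "b = sqrt (a\<^sup>2 - 1)" using bdef by simp
    have b0: "b > 0" using \<open>a\<^sup>2 > 1\<close> bb by simp
    have "b < sqrt (a\<^sup>2)" using bb by (subst bb) (intro real_sqrt_less_mono; simp)
    hence ba: "b < a" using a1 by simp
    have "gfun (\<lambda>x. ln ((x + (a - b)) / (x + (a + b)))) (\<lambda>x. ((a + b) - (a - b)) / ((x + (a - b)) * (x + (a + b))))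
           (((a + b) - (a - b)) / ((a - b) * (a + b))) ((a + b) - (a - b)) (((a + b) - (a - b)) / 2) (a + b)"
      using ba b0 by (intro gfun_ln) auto
    moreover have "g_tau tau = (\<lambda>x. ln ((x + (a - b)) / (x + (a + b))))"
      using t by (simp add: gt fun_eq_iff)
    ultimately show ?thesis by metis
  next
    assume t: "pi / 4 < tau \<and> tau < pi / 2"
    have "tan (pi / 4) < tan tau" using t by (intro tan_monotone) auto
    hence t1: "tan tau > 1" by (simp add: tan_45)
    have a1: "a < 1" and a0: "a > 0" using t1 by (simp_all add: cot_inv inverse_less_1_iff)
    have "a\<^sup>2 < 1" using a1 a0 by (simp add: power_less_one_iff abs_square_less_1)
    hence bb: "b = sqrt (1 - a\<^sup>2)" using bdef by simp
    have b0: "b > 0" using \<open>a\<^sup>2 < 1\<close> bb by simp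
    have "gfun (\<lambda>x. arctan ((x + (a - b)) / (x + (a + b))))
            (\<lambda>x. ((a + b) - (a - b)) / ((x + (a - b))\<^sup>2 + (x + (a + b))\<^sup>2))
           (((a + b) - (a - b)) / ((a + b)\<^sup>2)) ((a + b) - (a - b)) (((a + b) - (a - b)) / 2)
           ((a + b) + \<bar>a - b\<bar>)"
      using a0 b0 by (intro gfun_atan) auto
    moreover have "g_tau tau = (\<lambda>x. arctan ((x + (a - b)) / (x + (a + b))))"
      using t by (simp add: gt fun_eq_iff)
    ultimately show ?thesis by metis
  qed
qed



lemma diagm_mult: "diagm a ** diagm b = diagm (\<lambda>i. a i * b i)"
proof -
  have "(diagm a ** diagm b) $ i $ j = diagm (\<lambda>i. a i * b i) $ i $ j" for i j
  proof -
    have "(diagm a ** diagm b) $ i $ j = (\<Sum>k\<in>UNIV. (if i = k then a i else 0) * (if k = j then b k else 0))"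
      by (simp add: matrix_matrix_mult_def diagm_def)
    also have "\<dots> = (\<Sum>k\<in>UNIV. if k = i then (if i = j then a i * b i else 0) else 0)"
      by (rule sum.cong) auto
    also have "\<dots> = diagm (\<lambda>i. a i * b i) $ i $ j" by (simp add: diagm_def)
    finally show ?thesis .
  qed
  thus ?thesis by (simp add: vec_eq_iff)
qed

lemma diagm_one: "diagm (\<lambda>_. 1) = mat 1"
  by (simp add: diagm_def mat_def vec_eq_iff)

lemma PDPT_mult:
  fixes P :: "real^'n^'n"
  assumes "orthogonal_matrix P"
  shows "(P ** diagm a ** transpose P) ** (P ** diagm b ** transpose P) = P ** diagm (\<lambda>i. a i * b i) ** transpose P"
proof -
  have "(P ** diagm a ** transpose P) ** (P ** diagm b ** transpose P)
      = P ** diagm a ** (transpose P ** P) ** diagm b ** transpose P"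
    by (simp add: matrix_mul_assoc)
  also have "\<dots> = P ** diagm (\<lambda>i. a i * b i) ** transpose P"
    using assms by (simp add: orthogonal_matrix_def diagm_mult matrix_mul_assoc[symmetric])
  finally show ?thesis .
qed

lemma inv_PDPT:
  fixes P :: "real^'n^'n"
  assumes oP: "orthogonal_matrix P" and a: "\<And>i. a i \<noteq> 0"
  shows "matrix_inv (P ** diagm a ** transpose P) = P ** diagm (\<lambda>i. 1 / a i) ** transpose P"
proof -
  let ?A = "P ** diagm a ** transpose P" and ?B = "P ** diagm (\<lambda>i. 1 / a i) ** transpose P"
  have one: "P ** diagm (\<lambda>_. 1) ** transpose P = mat 1"
    using oP by (simp add: diagm_one orthogonal_matrix_def)
  have AB: "?A ** ?B = mat 1" using PDPT_mult[OF oP, of a "\<lambda>i. 1 / a i"] a one by simp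
  have BA: "?B ** ?A = mat 1" using PDPT_mult[OF oP, of "\<lambda>i. 1 / a i" a] a one by simp
  define X where "X = matrix_inv ?A"
  have "?A ** X = mat 1 \<and> X ** ?A = mat 1"
    unfolding X_def matrix_inv_def by (rule someI[of _ ?B]) (use AB BA in simp)
  hence "X = X ** (?A ** ?B)" using AB by simp
  also have "\<dots> = (X ** ?A) ** ?B" by (simp add: matrix_mul_assoc)
  also have "\<dots> = ?B" using \<open>?A ** X = mat 1 \<and> X ** ?A = mat 1\<close> by simp
  finally show ?thesis by (simp add: X_def)
qed

theorem lemma3p2:
  fixes tau :: real
  assumes tau: "(0 < tau \<and> tau < pi / 4) \<or> (pi / 4 < tau \<and> tau < pi / 2)"
  defines "n \<equiv> CARD('n)"
  shows
    "(\<forall>xs i. length xs = n \<and> (\<forall>x\<in>set xs. 0 \<le> x) \<and> i < n \<longrightarrow>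
        (\<forall>s t. 0 \<le> s \<and> s < t \<longrightarrow> F_tau tau (xs[i := s]) < F_tau tau (xs[i := t])) \<and>
        ((\<lambda>t. F_tau tau (xs[i := t])) has_real_derivative dF_tau tau xs i) (at (xs ! i)) \<and>
        dF_tau tau xs i > 0)
   \<and> (\<forall>xs i j. length xs = n \<and> i < n \<and> j < n \<longrightarrow>
        F_tau tau (xs[i := xs ! j, j := xs ! i]) = F_tau tau xs)
   \<and> (\<forall>mu1 mu2. mu1 > 0 \<and> mu2 > 0 \<longrightarrow>
        (\<exists>lam Lam. lam > 0 \<and> Lam > 0 \<and>
          (\<forall>xs\<in>Gamma_mu n mu1 mu2.
             Lam \<ge> (\<Sum>i<n. dF_tau tau xs i) \<and> (\<Sum>i<n. dF_tau tau xs i) \<ge> lam \<and>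
             Lam \<ge> (\<Sum>i<n. dF_tau tau xs i * (xs ! i)\<^sup>2) \<and>
             (\<Sum>i<n. dF_tau tau xs i * (xs ! i)\<^sup>2) \<ge> lam)))
   \<and> concave_on (pos_def_sym :: (real^'n^'n) set) (F_mat tau)
   \<and> concave_on (pos_def_sym :: (real^'n^'n) set) (\<lambda>A. - F_mat tau (matrix_inv A))
   \<and> (\<exists>f1 f2 :: real \<Rightarrow> real.
        mono_on {0<..} f1 \<and> mono_on {0<..} f2 \<and>
        (\<forall>xs. length xs = n \<and> sorted xs \<and> 0 \<le> xs ! 0 \<longrightarrow>
           f1 (xs ! 0) \<le> F_tau tau xs \<and> F_tau tau xs \<le> f2 (xs ! (n - 1))) \<and>
        (\<forall>Phi\<in>L_tau tau n. \<forall>Psi\<in>L_tau tau n. \<exists>t1 t2. t1 > 0 \<and> t2 > 0 \<and>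
           (\<forall>t>0. f1 t \<le> Phi \<longrightarrow> t \<le> t1) \<and>
           (\<forall>t>0. f2 t \<ge> Psi \<longrightarrow> t \<ge> t2)))"
proof -
  obtain g' U V W e where gf: "gfun (g_tau tau) g' U V W e" using g_tau_gfun[OF tau] by blast
  interpret gfun "g_tau tau" g' U V W e by (rule gf)
  let ?g = "g_tau tau"
  have F: "F_tau tau xs = sum_list (map ?g xs)" for xs by (simp add: F_tau_def)
  have n1: "n \<ge> 1" unfolding n_def by (simp add: Suc_leI)
  have dF: "dF_tau tau xs i = g' (xs ! i)" if "i < length xs" "0 \<le> xs ! i" for xs i
    unfolding dF_tau_def F using upd_deriv[OF that] .
  have P1: "\<forall>xs i. length xs = n \<and> (\<forall>x\<in>set xs. 0 \<le> x) \<and> i < n \<longrightarrow>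
        (\<forall>s t. 0 \<le> s \<and> s < t \<longrightarrow> F_tau tau (xs[i := s]) < F_tau tau (xs[i := t])) \<and>
        ((\<lambda>t. F_tau tau (xs[i := t])) has_real_derivative dF_tau tau xs i) (at (xs ! i)) \<and>
        dF_tau tau xs i > 0"
  proof (intro allI impI conjI)
    fix xs :: "real list" and i :: nat assume H: "length xs = n \<and> (\<forall>x\<in>set xs. 0 \<le> x) \<and> i < n"
    hence il: "i < length xs" and x0: "0 \<le> xs ! i" by auto
    show "F_tau tau (xs[i := s]) < F_tau tau (xs[i := t])" if "0 \<le> s \<and> s < t" for s t
      using strict[of s t] that unfolding F upd[OF il] by simp
    show "((\<lambda>t. F_tau tau (xs[i := t])) has_real_derivative dF_tau tau xs i) (at (xs ! i))"
      unfolding dF[OF il x0] F by (rule upd_der[OF il x0])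
    show "dF_tau tau xs i > 0" unfolding dF[OF il x0] by (rule pos[OF x0])
  qed
  have P2: "\<forall>xs i j. length xs = n \<and> i < n \<and> j < n \<longrightarrow>
        F_tau tau (xs[i := xs ! j, j := xs ! i]) = F_tau tau xs"
    by (auto simp: F sum_list_mset mset_swap)
  have P3: "\<forall>mu1 mu2. mu1 > 0 \<and> mu2 > 0 \<longrightarrow>
        (\<exists>lam Lam. lam > 0 \<and> Lam > 0 \<and>
          (\<forall>xs\<in>Gamma_mu n mu1 mu2.
             Lam \<ge> (\<Sum>i<n. dF_tau tau xs i) \<and> (\<Sum>i<n. dF_tau tau xs i) \<ge> lam \<and>
             Lam \<ge> (\<Sum>i<n. dF_tau tau xs i * (xs ! i)\<^sup>2) \<and>
             (\<Sum>i<n. dF_tau tau xs i * (xs ! i)\<^sup>2) \<ge> lam))"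
  proof (intro allI impI)
    fix mu1 mu2 :: real assume mu: "mu1 > 0 \<and> mu2 > 0"
    define lam where "lam = min (W / (mu1 + e)\<^sup>2) (W * (mu2 / (mu2 + e))\<^sup>2)"
    define Lam where "Lam = real n * U + real n * V + 1"
    have lam0: "lam > 0" using mu W e by (simp add: lam_def)
    have Lam0: "Lam > 0" using U V by (simp add: Lam_def add_nonneg_pos)
    show "\<exists>lam Lam. lam > 0 \<and> Lam > 0 \<and>
          (\<forall>xs\<in>Gamma_mu n mu1 mu2.
             Lam \<ge> (\<Sum>i<n. dF_tau tau xs i) \<and> (\<Sum>i<n. dF_tau tau xs i) \<ge> lam \<and>
             Lam \<ge> (\<Sum>i<n. dF_tau tau xs i * (xs ! i)\<^sup>2) \<and>
             (\<Sum>i<n. dF_tau tau xs i * (xs ! i)\<^sup>2) \<ge> lam)"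
    proof (intro exI conjI ballI)
      show "lam > 0" "Lam > 0" by (fact lam0, fact Lam0)
      fix xs assume "xs \<in> Gamma_mu n mu1 mu2"
      hence len: "length xs = n" and so: "sorted xs" and x00: "0 \<le> xs ! 0"
        and x0m: "xs ! 0 \<le> mu1" and xnm: "mu2 \<le> xs ! (n - 1)"
        by (auto simp: Gamma_mu_def)
      have nn: "0 \<le> xs ! i" if "i < n" for i using sorted_nonneg(1)[OF so x00] that len by simp
      have s1: "(\<Sum>i<n. dF_tau tau xs i) = (\<Sum>i<n. g' (xs ! i))"
        using dF nn len by (intro sum.cong) auto
      have s2: "(\<Sum>i<n. dF_tau tau xs i * (xs ! i)\<^sup>2) = (\<Sum>i<n. g' (xs ! i) * (xs ! i)\<^sup>2)"
        using dF nn len by (intro sum.cong) auto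
      have "(\<Sum>i<n. g' (xs ! i)) \<le> (\<Sum>i<n. U)" using ub nn by (intro sum_mono) auto
      moreover have "(\<Sum>i<n. U) = real n * U" by simp
      moreover have "real n * V \<ge> 0" using V by simp
      ultimately show "Lam \<ge> (\<Sum>i<n. dF_tau tau xs i)" unfolding s1 Lam_def by linarith
      have "(\<Sum>i<n. g' (xs ! i) * (xs ! i)\<^sup>2) \<le> (\<Sum>i<n. V)" using ub2 nn by (intro sum_mono) auto
      moreover have "(\<Sum>i<n. V) = real n * V" by simp
      moreover have "real n * U \<ge> 0" using U by simp
      ultimately show "Lam \<ge> (\<Sum>i<n. dF_tau tau xs i * (xs ! i)\<^sup>2)" unfolding s2 Lam_def by linarith
      have "lam \<le> W / (mu1 + e)\<^sup>2" by (simp add: lam_def)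
      also have "\<dots> \<le> W / (xs ! 0 + e)\<^sup>2"
        using W e x00 x0m by (intro divide_left_mono power_mono mult_pos_pos) auto
      also have "\<dots> \<le> g' (xs ! 0)" by (rule lb[OF x00])
      also have "\<dots> \<le> (\<Sum>i<n. g' (xs ! i))"
        using n1 nn pos by (intro member_le_sum) (auto intro: less_imp_le)
      finally show "(\<Sum>i<n. dF_tau tau xs i) \<ge> lam" unfolding s1 .
      let ?x = "xs ! (n - 1)"
      have xp: "?x > 0" using xnm mu by linarith
      have "mu2 / (mu2 + e) \<le> ?x / (?x + e)"
      proof -
        have "mu2 * (?x + e) \<le> ?x * (mu2 + e)" using xnm e by (simp add: algebra_simps)
        thus ?thesis using mu e xp by (simp add: divide_simps)
      qed
      hence "(mu2 / (mu2 + e))\<^sup>2 \<le> (?x / (?x + e))\<^sup>2" using mu e by (intro power_mono) auto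
      hence "lam \<le> W * (?x / (?x + e))\<^sup>2" unfolding lam_def using W
        by (meson min.cobounded2 mult_left_mono less_imp_le order_trans)
      also have "\<dots> = W / (?x + e)\<^sup>2 * ?x\<^sup>2" by (simp add: power_divide)
      also have "\<dots> \<le> g' ?x * ?x\<^sup>2" using lb[of ?x] xp by (intro mult_right_mono) auto
      also have "\<dots> \<le> (\<Sum>i<n. g' (xs ! i) * (xs ! i)\<^sup>2)"
      proof (rule member_le_sum)
        show "n - 1 \<in> {..<n}" using n1 by simp
        show "finite {..<n}" by simp
        fix i assume "i \<in> {..<n} - {n - 1}"
        hence "0 \<le> xs ! i" using nn by simp
        hence "0 \<le> g' (xs ! i)" using pos less_imp_le by blast
        thus "0 \<le> g' (xs ! i) * (xs ! i)\<^sup>2" by simp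
      qed
      finally show "(\<Sum>i<n. dF_tau tau xs i * (xs ! i)\<^sup>2) \<ge> lam" unfolding s2 .
    qed
  qed
  have P4: "concave_on (pos_def_sym :: (real^'n^'n) set) (F_mat tau)"
  proof (rule spectral_concave[OF conc])
    fix A :: "real^'n^'n" and P a
    assume "orthogonal_matrix P" "\<forall>i. a i > 0" "A = P ** diagm a ** transpose P"
    thus "F_mat tau A = (\<Sum>i\<in>UNIV. ?g (a i))"
      by (simp add: F_mat_def F eigvals_PDPT sum_evl)
  qed
  have P5: "concave_on (pos_def_sym :: (real^'n^'n) set) (\<lambda>A. - F_mat tau (matrix_inv A))"
  proof (rule spectral_concave[OF conc_inv])
    fix A :: "real^'n^'n" and P a
    assume oP: "orthogonal_matrix P" and a: "\<forall>i. a i > 0" and A: "A = P ** diagm a ** transpose P"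
    have "matrix_inv A = P ** diagm (\<lambda>i. 1 / a i) ** transpose P"
      unfolding A using a by (intro inv_PDPT[OF oP]) (auto simp: less_imp_neq[symmetric])
    thus "- F_mat tau (matrix_inv A) = (\<Sum>i\<in>UNIV. - ?g (1 / a i))"
      using oP by (simp add: F_mat_def F eigvals_PDPT sum_evl sum_negf)
  qed
  have P6: "\<exists>f1 f2 :: real \<Rightarrow> real.
        mono_on {0<..} f1 \<and> mono_on {0<..} f2 \<and>
        (\<forall>xs. length xs = n \<and> sorted xs \<and> 0 \<le> xs ! 0 \<longrightarrow>
           f1 (xs ! 0) \<le> F_tau tau xs \<and> F_tau tau xs \<le> f2 (xs ! (n - 1))) \<and>
        (\<forall>Phi\<in>L_tau tau n. \<forall>Psi\<in>L_tau tau n. \<exists>t1 t2. t1 > 0 \<and> t2 > 0 \<and>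
           (\<forall>t>0. f1 t \<le> Phi \<longrightarrow> t \<le> t1) \<and>
           (\<forall>t>0. f2 t \<ge> Psi \<longrightarrow> t \<ge> t2))"
  proof (intro exI[of _ "\<lambda>t. real n * ?g t"] conjI allI impI ballI)
    have m: "mono_on {0<..} (\<lambda>t. real n * ?g t)"
      by (rule mono_onI) (auto simp: le_iff intro!: mult_left_mono)
    show "mono_on {0<..} (\<lambda>t. real n * ?g t)" by (rule m)
    show "mono_on {0<..} (\<lambda>t. real n * ?g t)" by (rule m)
    fix xs :: "real list" assume H: "length xs = n \<and> sorted xs \<and> 0 \<le> xs ! 0"
    show "real n * ?g (xs ! 0) \<le> F_tau tau xs" unfolding F using lower_upper(1)[of xs n] H by simp
    show "F_tau tau xs \<le> real n * ?g (xs ! (n - 1))" unfolding F using lower_upper(2)[of xs n] H by simp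
  next
    fix Phi Psi :: real assume Phi: "Phi \<in> L_tau tau n" and Psi: "Psi \<in> L_tau tau n"
    obtain ys where ys: "Phi = F_tau tau ys" "length ys = n" "sorted ys" "\<forall>x\<in>set ys. 0 < x"
      using Phi by (auto simp: L_tau_def)
    obtain zs where zs: "Psi = F_tau tau zs" "length zs = n" "sorted zs" "\<forall>x\<in>set zs. 0 < x"
      using Psi by (auto simp: L_tau_def)
    have y1: "ys ! (n - 1) > 0" using ys n1 by (metis diff_less nth_mem zero_less_one less_le_trans)
    have z0: "zs ! 0 > 0" using zs n1 by (metis nth_mem less_le_trans zero_less_one)
    have y0: "ys ! 0 \<ge> 0" using ys n1 by (metis nth_mem less_le_trans zero_less_one less_imp_le)
    have z00: "zs ! 0 \<ge> 0" using z0 by simp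
    have Phi_le: "Phi \<le> real n * ?g (ys ! (n - 1))"
      unfolding ys(1) F using lower_upper(2)[OF ys(3) y0 ys(2)] .
    have Psi_ge: "real n * ?g (zs ! 0) \<le> Psi"
      unfolding zs(1) F using lower_upper(1)[OF zs(3) z00 zs(2)] .
    have npos: "real n > 0" using n1 by simp
    show "\<exists>t1 t2. t1 > 0 \<and> t2 > 0 \<and>
           (\<forall>t>0. real n * ?g t \<le> Phi \<longrightarrow> t \<le> t1) \<and>
           (\<forall>t>0. real n * ?g t \<ge> Psi \<longrightarrow> t \<ge> t2)"
    proof (intro exI conjI allI impI)
      show "ys ! (n - 1) > 0" "zs ! 0 > 0" by (fact y1, fact z0)
      fix t :: real assume t: "t > 0"
      { assume "real n * ?g t \<le> Phi"
        hence "real n * ?g t \<le> real n * ?g (ys ! (n - 1))" using Phi_le by linarith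
        hence "?g t \<le> ?g (ys ! (n - 1))" using npos by simp
        thus "t \<le> ys ! (n - 1)" using le_iff t y1 by simp }
      { assume "real n * ?g t \<ge> Psi"
        hence "real n * ?g (zs ! 0) \<le> real n * ?g t" using Psi_ge by linarith
        hence "?g (zs ! 0) \<le> ?g t" using npos by simp
        thus "zs ! 0 \<le> t" using le_iff t z0 by simp }
    qed
  qed
  show ?thesis using P1 P2 P3 P4 P5 P6 by blast
qed


end
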